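(* Let $X,Y$ be non-empty subsets of $\mathbb{R}^2$, let $\eta\in\mathbb{R}\setminus\{0\}$, $\xi\in\mathbb{N}^*$, $\varepsilon>0$ and $A\in\mathrm{SL}(2,\mathbb{Z})$. If $Y\subseteq B_\varepsilon(X)$, then $A\circ J_{\eta,\xi}\circ A^{-1}(Y)\subseteq B_\varepsilon(\mathrm{Str}(X,A(0,\eta)))$.
   Context: $B_\varepsilon(Z)$ is the open $\varepsilon$-neighbourhood of $Z$. $\mathrm{Str}(X,w)=X+[-w,w]$ (Minkowski sum with the segment joining $-w$ and $w$). For $\xi\in\mathbb{N}^*$, $\phi_\xi(x)=(-1)^{z+1}(4\xi x-2z-1)$ for $z\in\mathbb{Z}$, $x\in[\frac{z}{2\xi},\frac{z+1}{2\xi})$, and $J_{\eta,\xi}(x,y)=(x,y+\eta\phi_\xi(x))$. *)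

theory Defs
  imports "HOL-Analysis.Analysis"
begin

definition nbhd :: "real \<Rightarrow> (real^2) set \<Rightarrow> (real^2) set" where
  "nbhd \<epsilon> Z = {y. \<exists>x\<in>Z. dist y x < \<epsilon>}"

definition Str :: "(real^2) set \<Rightarrow> real^2 \<Rightarrow> (real^2) set" where
  "Str X w = {x + s | x s. x \<in> X \<and> s \<in> closed_segment (-w) w}"

text \<open>phi_xi(x) = (-1)^(z+1) (4 xi x - 2z - 1) where z is the unique integer with
  x in [z/(2 xi), (z+1)/(2 xi)), i.e. z = floor(2 xi x).\<close>
definition phi :: "nat \<Rightarrow> real \<Rightarrow> real" where
  "phi \<xi> x = (let z = \<lfloor>2 * real \<xi> * x\<rfloor> in
     (-1) powi (z + 1) * (4 * real \<xi> * x - 2 * of_int z - 1))"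

definition J :: "real \<Rightarrow> nat \<Rightarrow> real^2 \<Rightarrow> real^2" where
  "J \<eta> \<xi> v = vector [v$1, v$2 + \<eta> * phi \<xi> (v$1)]"

definition real_mat :: "int^2^2 \<Rightarrow> real^2^2" where
  "real_mat A = (\<chi> i j. real_of_int (A$i$j))"

end

theory Submission
  imports Defs
begin

lemma phi_bound: "\<bar>phi \<xi> x\<bar> \<le> 1"
proof -
  define z where "z = \<lfloor>2 * real \<xi> * x\<rfloor>"
  have a: "of_int z \<le> 2 * real \<xi> * x" "2 * real \<xi> * x < of_int z + 1"
    unfolding z_def by linarith+
  have b: "\<bar>(-1::real) powi (z + 1)\<bar> = 1" by (simp add: power_int_abs)
  have "\<bar>4 * real \<xi> * x - 2 * of_int z - 1\<bar> \<le> 1" using a by linarith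
  then show ?thesis unfolding phi_def Let_def z_def[symmetric] abs_mult b by simp
qed

lemma J_eq: "J \<eta> \<xi> v = v + phi \<xi> (v$1) *\<^sub>R vector [0, \<eta>]"
  unfolding J_def by (simp add: vec_eq_iff forall_2 vector_2)

lemma det_real_mat: "det (real_mat A) = real_of_int (det A)"
  unfolding det_2 real_mat_def by simp

theorem mainTheorem13:
  fixes X Y :: "(real^2) set" and \<eta> \<epsilon> :: real and \<xi> :: nat and A :: "int^2^2"
  assumes "X \<noteq> {}" and "Y \<noteq> {}"
    and "\<eta> \<noteq> 0" and "\<xi> \<ge> 1" and "\<epsilon> > 0"
    and "det A = 1"
    and "Y \<subseteq> nbhd \<epsilon> X"
  shows "(\<lambda>y. real_mat A *v J \<eta> \<xi> (matrix_inv (real_mat A) *v y)) ` Y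
           \<subseteq> nbhd \<epsilon> (Str X (real_mat A *v vector [0, \<eta>]))"
proof
  fix q assume "q \<in> (\<lambda>y. real_mat A *v J \<eta> \<xi> (matrix_inv (real_mat A) *v y)) ` Y"
  then obtain y where y: "y \<in> Y" and q: "q = real_mat A *v J \<eta> \<xi> (matrix_inv (real_mat A) *v y)"
    by blast
  define B where "B = real_mat A"
  define w where "w = B *v vector [0, \<eta>]"
  define p where "p = phi \<xi> ((matrix_inv B *v y)$1)"
  have "det B \<noteq> 0" using assms(6) by (simp add: B_def det_real_mat)
  then have inv: "invertible B" by (simp add: invertible_det_nz)
  have "B ** matrix_inv B = mat 1"
    using inv unfolding invertible_def matrix_inv_def by (rule someI_ex[THEN conjunct1])
  then have yy: "B *v (matrix_inv B *v y) = y"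
    by (simp add: matrix_vector_mul_assoc)
  have "q = B *v (matrix_inv B *v y) + p *\<^sub>R w"
    unfolding q J_eq B_def[symmetric] p_def w_def
    by (simp add: matrix_vector_right_distrib matrix_vector_mult_scaleR)
  then have q2: "q = y + p *\<^sub>R w" using yy by simp
  obtain x where x: "x \<in> X" "dist y x < \<epsilon>" using assms(7) y unfolding nbhd_def by blast
  have pb: "\<bar>p\<bar> \<le> 1" unfolding p_def by (rule phi_bound)
  have "p *\<^sub>R w = (1 - (1 + p)/2) *\<^sub>R (-w) + ((1 + p)/2) *\<^sub>R w"
    by (simp add: algebra_simps scaleR_add_left[symmetric] del: scaleR_add_left) (simp add: field_simps)
  then have "p *\<^sub>R w \<in> closed_segment (-w) w"
    unfolding in_segment using pb by (intro exI[of _ "(1 + p)/2"]) auto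
  then have "x + p *\<^sub>R w \<in> Str X w" unfolding Str_def using x by blast
  moreover have "dist q (x + p *\<^sub>R w) < \<epsilon>" using x q2 by (simp add: dist_norm)
  ultimately show "q \<in> nbhd \<epsilon> (Str X (real_mat A *v vector [0, \<eta>]))"
    unfolding nbhd_def w_def B_def by blast
qed

end
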